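(* Let $m=1$, let $\boldsymbol{S}\in\mathrm{Mat}(M,M,\mathbb{C})$ be invertible, $\boldsymbol{U}\in\mathrm{Mat}(1,M,\mathbb{C})$, $\boldsymbol{V}\in\mathrm{Mat}(M,1,\mathbb{C})$, $\boldsymbol{K}$ a solution of $\boldsymbol{S}\boldsymbol{K}+\boldsymbol{K}\boldsymbol{S}=\boldsymbol{V}\boldsymbol{U}$, $\boldsymbol{\Xi}=e^{-\boldsymbol{S}x-\boldsymbol{S}^{-1}y}$, $p_0\in\mathbb{C}$, and let $q,p$ be the scalar functions $$q=\boldsymbol{U}\boldsymbol{\Xi}\,(\boldsymbol{I}_M+(\boldsymbol{K}\boldsymbol{\Xi})^2)^{-1}\boldsymbol{V},\qquad p=p_0-\boldsymbol{U}\boldsymbol{\Xi}\boldsymbol{K}\boldsymbol{\Xi}\,(\boldsymbol{I}_M+(\boldsymbol{K}\boldsymbol{\Xi})^2)^{-1}\boldsymbol{V}.$$ Then, with $D:=\det(\boldsymbol{I}_M+(\boldsymbol{K}\boldsymbol{\Xi})^2)$, on any open set where $D\neq0$, $$p=p_0+\frac{D_x}{D}\quad(\text{i.e. } p=p_0+(\log D)_x),\qquad q=2\,\mathrm{tr}\big(\boldsymbol{S}\boldsymbol{K}\boldsymbol{\Xi}\,(\boldsymbol{I}_M+(\boldsymbol{K}\boldsymbol{\Xi})^2)^{-1}\big).$$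
   Context: $\boldsymbol{I}_M$ is the $M\times M$ identity matrix; $e^{(\cdot)}$ is the matrix exponential; $x,y$ are real variables and subscripts denote partial derivatives. *)

theory Defs
  imports "HOL-Analysis.Analysis"
begin

primrec mat_pow :: "'a::semiring_1^'n^'n \<Rightarrow> nat \<Rightarrow> 'a^'n^'n" where
  "mat_pow A 0 = mat 1"
| "mat_pow A (Suc k) = A ** mat_pow A k"

definition mat_exp :: "complex^'n^'n \<Rightarrow> complex^'n^'n" where
  "mat_exp A = (\<Sum>k. (inverse (fact k) :: real) *\<^sub>R mat_pow A k)"

end

theory Submission
  imports Defs
begin


typedef (overloaded) ('n::finite) cm = "UNIV :: ((complex^'n) \<Rightarrow>\<^sub>L (complex^'n)) set"
  morphisms rep_cm abs_cm by simp

setup_lifting type_definition_cm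

instantiation cm :: (finite) real_normed_algebra_1
begin
lift_definition norm_cm :: "'a cm \<Rightarrow> real" is norm .
lift_definition minus_cm :: "'a cm \<Rightarrow> 'a cm \<Rightarrow> 'a cm" is "(-)" .
lift_definition plus_cm :: "'a cm \<Rightarrow> 'a cm \<Rightarrow> 'a cm" is "(+)" .
lift_definition uminus_cm :: "'a cm \<Rightarrow> 'a cm" is "uminus" .
lift_definition zero_cm :: "'a cm" is "0" .
lift_definition scaleR_cm :: "real \<Rightarrow> 'a cm \<Rightarrow> 'a cm" is "scaleR" .
lift_definition times_cm :: "'a cm \<Rightarrow> 'a cm \<Rightarrow> 'a cm" is "(o\<^sub>L)" .
lift_definition one_cm :: "'a cm" is "id_blinfun" .
definition dist_cm :: "'a cm \<Rightarrow> 'a cm \<Rightarrow> real" where "dist_cm a b = norm (a - b)"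
definition [code del]:
  "(uniformity :: ('a cm \<times> 'a cm) filter) = (INF e\<in>{0 <..}. principal {(x, y). dist x y < e})"
definition open_cm :: "'a cm set \<Rightarrow> bool"
  where [code del]: "open_cm S = (\<forall>x\<in>S. \<forall>\<^sub>F (x', y) in uniformity. x' = x \<longrightarrow> y \<in> S)"
definition sgn_cm :: "'a cm \<Rightarrow> 'a cm" where "sgn_cm x = scaleR (inverse (norm x)) x"
instance
  apply standard
  unfolding dist_cm_def open_cm_def sgn_cm_def uniformity_cm_def
  apply (simp_all add: rep_cm_inject[symmetric] norm_cm.rep_eq minus_cm.rep_eq plus_cm.rep_eq uminus_cm.rep_eq
     zero_cm.rep_eq scaleR_cm.rep_eq times_cm.rep_eq one_cm.rep_eq algebra_simps norm_triangle_ineq norm_blinfun_compose)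
  apply (auto intro!: blinfun_eqI simp: blinfun.bilinear_simps)
  apply (metis blinfun_apply_id_blinfun zero_blinfun.rep_eq axis_eq_0_iff one_neq_zero)
  done
end

instance cm :: (finite) banach
proof
  fix X :: "nat \<Rightarrow> 'a cm"
  assume "Cauchy X"
  then have "Cauchy (\<lambda>n. rep_cm (X n))"
    unfolding Cauchy_def dist_norm by (simp add: dist_cm_def norm_cm.rep_eq minus_cm.rep_eq)
  then obtain L where "(\<lambda>n. rep_cm (X n)) \<longlonglongrightarrow> L" using convergent_eq_Cauchy convergent_def by blast
  then have "X \<longlonglongrightarrow> abs_cm L"
    unfolding LIMSEQ_def dist_norm 
    by (simp add: dist_cm_def norm_cm.rep_eq minus_cm.rep_eq abs_cm_inverse)
  then show "convergent X" unfolding convergent_def by blast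
qed



lemma mv_scaleR: "(A::complex^'n^'m) *v (c *\<^sub>R x) = c *\<^sub>R (A *v x)"
  by (simp add: vec_eq_iff matrix_vector_mult_def scaleR_sum_right)

lemma bl_mv: "bounded_linear (\<lambda>v::complex^'n. (A::complex^'n^'m) *v v)"
proof -
  have "linear (\<lambda>v::complex^'n. A *v v)"
    by (rule linearI) (simp_all add: matrix_vector_right_distrib mv_scaleR)
  then show ?thesis using linear_conv_bounded_linear by blast
qed

definition Lm :: "complex^'n^'n \<Rightarrow> 'n::finite cm" where
  "Lm A = abs_cm (Blinfun (\<lambda>v. A *v v))"

lemma rep_Lm: "blinfun_apply (rep_cm (Lm A)) v = A *v v"
  by (simp add: Lm_def abs_cm_inverse bounded_linear_Blinfun_apply[OF bl_mv])

lemma Lm_eqI: "(\<And>v. blinfun_apply (rep_cm X) v = blinfun_apply (rep_cm Y) v) \<Longrightarrow> X = Y"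
  by (metis blinfun_eqI rep_cm_inject)

lemma Lm_mult: "Lm (A ** B) = Lm A * Lm B"
  by (rule Lm_eqI) (simp add: rep_Lm times_cm.rep_eq matrix_vector_mul_assoc)

lemma Lm_one: "Lm (mat 1) = 1"
  by (rule Lm_eqI) (simp add: rep_Lm one_cm.rep_eq)

lemma Lm_add: "Lm (A + B) = Lm A + Lm B"
  by (rule Lm_eqI) (simp add: rep_Lm plus_cm.rep_eq blinfun.add_left matrix_vector_mult_add_rdistrib)

lemma Lm_scaleR: "Lm (r *\<^sub>R A) = r *\<^sub>R Lm A"
  by (rule Lm_eqI) (simp add: rep_Lm scaleR_cm.rep_eq blinfun.scaleR_left vec_eq_iff matrix_vector_mult_def
     scaleR_sum_right)

lemma Lm_uminus: "Lm (- A) = - Lm A"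
  using Lm_scaleR[of "-1" A] by simp

lemma Lm_diff: "Lm (A - B) = Lm A - Lm B"
  using Lm_add[of A "-B"] Lm_uminus[of B] by simp

lemma Lm_pow: "Lm (mat_pow A k) = Lm A ^ k"
  by (induct k) (simp_all add: Lm_one Lm_mult)

definition Rm :: "'n::finite cm \<Rightarrow> complex^'n^'n" where
  "Rm f = (\<chi> i j. (blinfun_apply (rep_cm f) (axis j 1)) $ i)"

lemma Rm_Lm: "Rm (Lm A) = A"
  by (simp add: Rm_def rep_Lm vec_eq_iff matrix_vector_mult_def axis_def
      if_distrib if_distribR sum.delta' cong: if_cong)

lemma Rm_Lm_mult: "Rm (Lm B * X) = B ** Rm X"
  by (simp add: Rm_def rep_Lm times_cm.rep_eq vec_eq_iff matrix_vector_mult_def matrix_matrix_mult_def)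

lemma norm_axis_c: "norm (axis j (1::complex)) = 1"
  by (simp add: norm_vec_def L2_set_def axis_def if_distrib if_distribR sum.delta' cong: if_cong)

lemma bl_Rm: "bounded_linear (Rm :: 'n::finite cm \<Rightarrow> _)"
proof
  fix f g :: "'n cm" and r :: real
  show "Rm (f + g) = Rm f + Rm g"
    by (simp add: Rm_def vec_eq_iff plus_cm.rep_eq blinfun.add_left)
  show "Rm (r *\<^sub>R f) = r *\<^sub>R Rm f"
    by (simp add: Rm_def vec_eq_iff scaleR_cm.rep_eq blinfun.scaleR_left)
  have "norm (Rm f) \<le> norm f * (real CARD('n) * real CARD('n))" for f :: "'n cm"
  proof -
    have e: "norm (Rm f $ i $ j) \<le> norm f" for i j
    proof -
      have "norm (Rm f $ i $ j) \<le> norm (blinfun_apply (rep_cm f) (axis j 1))"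
        by (simp add: Rm_def Finite_Cartesian_Product.norm_nth_le)
      also have "\<dots> \<le> norm (rep_cm f) * norm (axis j (1::complex))" by (rule norm_blinfun)
      finally show ?thesis by (simp add: norm_axis_c norm_cm.rep_eq)
    qed
    have "norm (Rm f) \<le> (\<Sum>i\<in>UNIV. norm (Rm f $ i))"
      unfolding norm_vec_def by (rule L2_set_le_sum) simp
    also have "\<dots> \<le> (\<Sum>i\<in>UNIV. \<Sum>j\<in>(UNIV::'n set). norm (Rm f $ i $ j))"
      by (rule sum_mono) (unfold norm_vec_def, rule L2_set_le_sum, simp)
    also have "\<dots> \<le> (\<Sum>i\<in>(UNIV::'n set). \<Sum>j\<in>(UNIV::'n set). norm f)"
      by (intro sum_mono e)
    also have "\<dots> = norm f * (real CARD('n) * real CARD('n))" by simp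
    finally show "norm (Rm f) \<le> norm f * (real CARD('n) * real CARD('n))" .
  qed
  then show "\<exists>K. \<forall>x::'n cm. norm (Rm x) \<le> norm x * K" by (intro exI allI) assumption
qed

lemma mat_exp_Rm: "mat_exp A = Rm (exp (Lm A))"
proof -
  have "(\<lambda>k. Rm ((Lm A)^k /\<^sub>R fact k)) sums Rm (exp (Lm A))"
    by (rule bounded_linear.sums[OF bl_Rm exp_converges])
  moreover have "Rm ((Lm A)^k /\<^sub>R fact k) = (inverse (fact k) :: real) *\<^sub>R mat_pow A k" for k
    by (metis Lm_pow Lm_scaleR Rm_Lm)
  ultimately have "(\<lambda>k. (inverse (fact k) :: real) *\<^sub>R mat_pow A k) sums Rm (exp (Lm A))" by simp
  then show ?thesis unfolding mat_exp_def by (rule sums_unique[symmetric])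
qed



lemma matrix_inv_both:
  assumes "invertible (A::'a::semiring_1^'n^'m)"
  shows "A ** matrix_inv A = mat 1" "matrix_inv A ** A = mat 1"
proof -
  from assms obtain A' where "A ** A' = mat 1 \<and> A' ** A = mat 1" unfolding invertible_def by blast
  then have "A ** matrix_inv A = mat 1 \<and> matrix_inv A ** A = mat 1"
    unfolding matrix_inv_def by (rule someI)
  then show "A ** matrix_inv A = mat 1" "matrix_inv A ** A = mat 1" by auto
qed

lemma Lm_inj: "Lm A = Lm B \<Longrightarrow> A = B"
  by (metis Rm_Lm)

lemmas Lm_simps = Lm_mult Lm_add Lm_diff Lm_uminus Lm_scaleR Lm_one

lemma mm_add_r: "((A::complex^'n^'n) + B) ** (C::complex^'n^'n) = A ** C + B ** C"
  by (rule Lm_inj) (simp add: Lm_simps algebra_simps)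
lemma mm_add_l: "(C::complex^'n^'n) ** ((A::complex^'n^'n) + B) = C ** A + C ** B"
  by (rule Lm_inj) (simp add: Lm_simps algebra_simps)
lemma mm_scale_r: "(c *\<^sub>R (A::complex^'n^'n)) ** (C::complex^'n^'n) = c *\<^sub>R (A ** C)"
  by (rule Lm_inj) (simp add: Lm_simps algebra_simps)
lemma mm_scale_l: "(C::complex^'n^'n) ** (c *\<^sub>R (A::complex^'n^'n)) = c *\<^sub>R (C ** A)"
  by (rule Lm_inj) (simp add: Lm_simps algebra_simps)

lemma linear_mm_right: "linear (\<lambda>X::complex^'n^'n. X ** (C::complex^'n^'n))"
  unfolding linear_iff by (simp add: mm_add_r mm_scale_r)

lemma linear_mm_left: "linear (\<lambda>X::complex^'n^'n. (C::complex^'n^'n) ** X)"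
  unfolding linear_iff by (simp add: mm_add_l mm_scale_l)

lemma bl_mm_right: "bounded_linear (\<lambda>X::complex^'n^'n. X ** (C::complex^'n^'n))"
  using linear_mm_right linear_conv_bounded_linear by blast

lemma bl_mm_left: "bounded_linear (\<lambda>X::complex^'n^'n. (C::complex^'n^'n) ** X)"
  using linear_mm_left linear_conv_bounded_linear by blast

lemma bbl_mm: "bounded_bilinear (\<lambda>(X::complex^'n^'n) (Y::complex^'n^'n). X ** Y)"
  unfolding bilinear_conv_bounded_bilinear[symmetric] bilinear_def
  using linear_mm_left linear_mm_right by auto

lemma mat_exp_sums: "(\<lambda>k. (inverse (fact k) :: real) *\<^sub>R mat_pow A k) sums mat_exp A"
proof -
  have "(\<lambda>k. Rm ((Lm A)^k /\<^sub>R fact k)) sums Rm (exp (Lm A))"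
    by (rule bounded_linear.sums[OF bl_Rm exp_converges])
  moreover have "Rm ((Lm A)^k /\<^sub>R fact k) = (inverse (fact k) :: real) *\<^sub>R mat_pow A k" for k
    by (metis Lm_pow Lm_scaleR Rm_Lm)
  ultimately show ?thesis by (simp add: mat_exp_Rm)
qed

lemma mat_pow_commute:
  assumes "(M::complex^'n^'n) ** S = S ** M"
  shows "mat_pow M k ** S = S ** mat_pow M k"
proof (induct k)
  case 0 then show ?case by simp
next
  case (Suc k)
  have "mat_pow M (Suc k) ** S = M ** (mat_pow M k ** S)" by (simp add: matrix_mul_assoc)
  also have "\<dots> = (M ** S) ** mat_pow M k" by (simp add: Suc matrix_mul_assoc)
  also have "\<dots> = S ** mat_pow M (Suc k)" by (simp add: assms matrix_mul_assoc)
  finally show ?case .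
qed

lemma mat_exp_commute:
  assumes "(M::complex^'n^'n) ** S = S ** M"
  shows "mat_exp M ** S = S ** mat_exp M"
proof -
  have 1: "(\<lambda>k. ((inverse (fact k) :: real) *\<^sub>R mat_pow M k) ** S) sums (mat_exp M ** S)"
    by (rule bounded_linear.sums[OF bl_mm_right mat_exp_sums])
  have 2: "(\<lambda>k. S ** ((inverse (fact k) :: real) *\<^sub>R mat_pow M k)) sums (S ** mat_exp M)"
    by (rule bounded_linear.sums[OF bl_mm_left mat_exp_sums])
  have "((inverse (fact k) :: real) *\<^sub>R mat_pow M k) ** S = S ** ((inverse (fact k) :: real) *\<^sub>R mat_pow M k)" for k
    by (metis mat_pow_commute[OF assms] matrix_scalar_ac scalar_matrix_assoc)
  with 1 2 show ?thesis by (metis (no_types, lifting) ext sums_unique2)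
qed

lemma Xi_props:
  fixes S :: "complex^'n^'n" and y t :: real
  assumes S_inv: "invertible S"
  defines "Xi \<equiv> \<lambda>t. mat_exp (- (t *\<^sub>R S) - y *\<^sub>R matrix_inv S)"
  shows "Xi t ** S = S ** Xi t"
    and "(Xi has_vector_derivative (- S ** Xi t)) (at t)"
proof -
  note inv = matrix_inv_both[OF S_inv]
  have c1: "Lm S * Lm (matrix_inv S) = Lm (matrix_inv S) * Lm S"
    by (simp add: Lm_mult[symmetric] inv)
  show "Xi t ** S = S ** Xi t" unfolding Xi_def
    by (rule mat_exp_commute, rule Lm_inj) (simp add: Lm_simps algebra_simps c1)
  define a where "a = - Lm S"
  define E where "E = exp (Lm (- (y *\<^sub>R matrix_inv S)))"
  have XiE: "Xi s = Rm (exp (s *\<^sub>R a) * E)" for s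
  proof -
    have "Lm (- (s *\<^sub>R S) - y *\<^sub>R matrix_inv S) = s *\<^sub>R a + Lm (- (y *\<^sub>R matrix_inv S))"
      by (simp add: a_def Lm_simps)
    moreover have "(s *\<^sub>R a) * Lm (- (y *\<^sub>R matrix_inv S)) = Lm (- (y *\<^sub>R matrix_inv S)) * (s *\<^sub>R a)"
      by (simp add: a_def Lm_simps c1)
    ultimately show ?thesis
      by (simp add: Xi_def mat_exp_Rm E_def exp_add_commuting)
  qed
  have "((\<lambda>s. exp (s *\<^sub>R a) * E) has_vector_derivative (exp (t *\<^sub>R a) * a) * E) (at t)"
    by (rule has_vector_derivative_mult_left, rule exp_scaleR_has_vector_derivative_right)
  then have "((\<lambda>s. Rm (exp (s *\<^sub>R a) * E)) has_vector_derivative Rm ((exp (t *\<^sub>R a) * a) * E)) (at t)"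
    by (rule bounded_linear.has_vector_derivative[OF bl_Rm])
  moreover have "Rm ((exp (t *\<^sub>R a) * a) * E) = - S ** Xi t"
  proof -
    have "(exp (t *\<^sub>R a) * a) * E = a * (exp (t *\<^sub>R a) * E)"
      by (simp add: exp_times_scaleR_commute mult.assoc[symmetric])
    then have "(exp (t *\<^sub>R a) * a) * E = Lm (- S) * (exp (t *\<^sub>R a) * E)"
      by (simp add: a_def Lm_uminus)
    then show ?thesis by (simp add: Rm_Lm_mult XiE)
  qed
  moreover have XiF: "Xi = (\<lambda>s. Rm (exp (s *\<^sub>R a) * E))" using XiE by auto
  ultimately show "(Xi has_vector_derivative (- S ** Xi t)) (at t)" by simp
qed



lemma det_vd_sum:
  fixes M :: "real \<Rightarrow> complex^'n^'n"
  assumes MD: "(M has_vector_derivative M') (at x)"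
  shows "((\<lambda>t. det (M t)) has_vector_derivative
     (\<Sum>k\<in>UNIV. det (\<chi> i. if i = k then row k M' else row i (M x)))) (at x)"
proof -
  have E: "((\<lambda>t. M t $ i $ j) has_derivative (\<lambda>h. h *\<^sub>R (M' $ i $ j))) (at x)" for i j
  proof -
    have "bounded_linear (\<lambda>X::complex^'n^'n. X $ i $ j)"
      using bounded_linear_compose[OF bounded_linear_vec_nth bounded_linear_vec_nth] .
    from bounded_linear.has_vector_derivative[OF this MD]
    show ?thesis unfolding has_vector_derivative_def by simp
  qed
  let ?P = "{p. p permutes (UNIV::'n set)}"
  have "((\<lambda>t. \<Sum>p\<in>?P. of_int (sign p) * (\<Prod>i\<in>UNIV. M t $ i $ p i)) has_derivative
     (\<lambda>h. \<Sum>p\<in>?P. of_int (sign p) * (\<Sum>k\<in>UNIV. (h *\<^sub>R (M' $ k $ p k)) * (\<Prod>j\<in>UNIV - {k}. M x $ j $ p j)))) (at x)"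
    by (intro has_derivative_sum has_derivative_mult_right has_derivative_prod E)
  then have D: "((\<lambda>t. det (M t)) has_derivative
     (\<lambda>h. \<Sum>p\<in>?P. of_int (sign p) * (\<Sum>k\<in>UNIV. (h *\<^sub>R (M' $ k $ p k)) * (\<Prod>j\<in>UNIV - {k}. M x $ j $ p j)))) (at x)"
    unfolding det_def .
  have R: "det (\<chi> i. if i = k then row k M' else row i (M x)) =
      (\<Sum>p\<in>?P. of_int (sign p) * ((M' $ k $ p k) * (\<Prod>j\<in>UNIV - {k}. M x $ j $ p j)))" for k
  proof -
    have "(\<Prod>i\<in>UNIV. (\<chi> i. if i = k then row k M' else row i (M x)) $ i $ p i)
        = (M' $ k $ p k) * (\<Prod>j\<in>UNIV - {k}. M x $ j $ p j)" for p
    proof -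
      have "(\<Prod>i\<in>UNIV. (\<chi> i. if i = k then row k M' else row i (M x)) $ i $ p i)
        = (\<chi> i. if i = k then row k M' else row i (M x)) $ k $ p k *
          (\<Prod>i\<in>UNIV - {k}. (\<chi> i. if i = k then row k M' else row i (M x)) $ i $ p i)"
        by (rule prod.remove) auto
      also have "\<dots> = (M' $ k $ p k) * (\<Prod>j\<in>UNIV - {k}. M x $ j $ p j)"
        by (intro arg_cong2[where f="(*)"] prod.cong) (auto simp: row_def)
      finally show ?thesis .
    qed
    then show ?thesis unfolding det_def by simp
  qed
  have "(\<lambda>h. \<Sum>p\<in>?P. of_int (sign p) * (\<Sum>k\<in>UNIV. (h *\<^sub>R (M' $ k $ p k)) * (\<Prod>j\<in>UNIV - {k}. M x $ j $ p j)))
      = (\<lambda>h. h *\<^sub>R (\<Sum>k\<in>UNIV. det (\<chi> i. if i = k then row k M' else row i (M x))))"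
  proof
    fix h
    show "(\<Sum>p\<in>?P. of_int (sign p) * (\<Sum>k\<in>UNIV. (h *\<^sub>R (M' $ k $ p k)) * (\<Prod>j\<in>UNIV - {k}. M x $ j $ p j)))
      = h *\<^sub>R (\<Sum>k\<in>UNIV. det (\<chi> i. if i = k then row k M' else row i (M x)))"
      unfolding R scaleR_sum_right sum_distrib_left
      by (subst sum.swap) (simp add: scaleR_conv_of_real mult_ac)
  qed
  with D show ?thesis unfolding has_vector_derivative_def by simp
qed

lemma jacobi_sum:
  fixes A N :: "complex^'n^'n"
  shows "(\<Sum>k\<in>UNIV. det (\<chi> i. if i = k then row k (N ** A) else row i A)) = trace N * det A"
proof -
  have rowk: "row k (N ** A) = (\<Sum>j\<in>UNIV. N $ k $ j *s row j A)" for k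
    by (simp add: vec_eq_iff row_def matrix_matrix_mult_def sum_component)
  have one: "det (\<chi> i. if i = k then N $ k $ j *s row j A else row i A) = N $ k $ j * (if j = k then det A else 0)" for k j
  proof -
    have "det (\<chi> i. if i = k then N $ k $ j *s row j A else row i A) = N $ k $ j * det (\<chi> i. if i = k then row j A else row i A)"
      by (rule det_row_mul)
    moreover have "det (\<chi> i. if i = k then row j A else row i A) = (if j = k then det A else 0)"
    proof (cases "j = k")
      case True
      then have "(\<chi> i. if i = k then row j A else row i A) = A" by (simp add: vec_eq_iff row_def)
      then show ?thesis using True by simp
    next
      case False
      have "det (\<chi> i. if i = k then row j A else row i A) = 0"
        by (rule det_identical_rows[of k j]) (use False in \<open>auto simp: row_def vec_eq_iff\<close>)
      then show ?thesis using False by simp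
    qed
    ultimately show ?thesis by simp
  qed
  have "(\<Sum>k\<in>UNIV. det (\<chi> i. if i = k then row k (N ** A) else row i A))
      = (\<Sum>k\<in>UNIV. \<Sum>j\<in>UNIV. det (\<chi> i. if i = k then N $ k $ j *s row j A else row i A))"
  proof (rule sum.cong[OF refl])
    fix k
    have "(\<chi> i. if i = k then row k (N ** A) else row i A) = (\<chi> i. if i = k then (\<Sum>j\<in>UNIV. N $ k $ j *s row j A) else row i A)"
      by (intro arg_cong[where f=vec_lambda] ext) (auto simp: rowk)
    then show "det (\<chi> i. if i = k then row k (N ** A) else row i A) = (\<Sum>j\<in>UNIV. det (\<chi> i. if i = k then N $ k $ j *s row j A else row i A))"
      using det_linear_row_sum[of UNIV k "\<lambda>i j. N $ k $ j *s row j A" "\<lambda>i. row i A"] by simp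
  qed
  also have "\<dots> = (\<Sum>k\<in>UNIV. N $ k $ k * det A)"
    by (simp add: one if_distrib cong: if_cong)
  also have "\<dots> = trace N * det A" by (simp add: trace_def sum_distrib_right)
  finally show ?thesis .
qed

lemma det_vd:
  fixes M :: "real \<Rightarrow> complex^'n^'n"
  assumes MD: "(M has_vector_derivative M') (at x)" and inv: "invertible (M x)"
  shows "((\<lambda>t. det (M t)) has_vector_derivative (trace (M' ** matrix_inv (M x)) * det (M x))) (at x)"
proof -
  have eq: "(M' ** matrix_inv (M x)) ** M x = M'"
    by (simp add: matrix_mul_assoc[symmetric] matrix_inv_both[OF inv])
  have "(\<Sum>k\<in>UNIV. det (\<chi> i. if i = k then row k M' else row i (M x))) = trace (M' ** matrix_inv (M x)) * det (M x)"
    using jacobi_sum[of "M' ** matrix_inv (M x)" "M x"] unfolding eq .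
  with det_vd_sum[OF MD] show ?thesis by simp
qed



lemma ring_a: fixes g k x b :: "'a::ring"
  assumes xs: "x* g = g*x"
  shows "(g*k + k* g) * (x*k*x*b) = g*(k*x)*(k*x)*b + (k*x)* g*(k*x)*b"
proof -
  have "k* g*x*k*x*b = k*x* g*k*x*b" using xs by (metis mult.assoc)
  then show ?thesis by (simp add: distrib_right mult.assoc)
qed

lemma ring_b: fixes g k x b :: "'a::ring"
  assumes xs: "x* g = g*x"
  shows "(g*k + k* g) * (x*b) = g*(k*x)*b + (k*x)* g*b"
proof -
  have "k* g*x*b = k*x* g*b" using xs by (metis mult.assoc)
  then show ?thesis by (simp add: distrib_right mult.assoc)
qed

lemma ring_c: fixes g k x b :: "'a::ring"
  assumes xs: "x* g = g*x"
  shows "((k*x) * (k * (- g * x)) + (k * (- g * x)) * (k*x)) * b = - ((k*x)*(k*x)* g*b) - (k*x)* g*(k*x)*b"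
proof -
  have "k*x*k* g*x*b = k*x*k*x* g*b" using xs by (metis mult.assoc)
  moreover have "k* g*x*k*x*b = k*x* g*k*x*b" using xs by (metis mult.assoc)
  ultimately show ?thesis by (simp add: algebra_simps)
qed

lemma ring_comm_inv: fixes a b :: "'a::ring_1"
  assumes "(1 + a*a) * b = 1" "b * (1 + a*a) = 1"
  shows "a * b = b * a"
proof -
  have "b * a = b * a * ((1 + a*a) * b)" using assms by simp
  also have "\<dots> = b * ((1 + a*a) * a) * b" by (simp add: algebra_simps)
  also have "\<dots> = (b * (1 + a*a)) * a * b" by (simp add: mult.assoc)
  finally show ?thesis using assms by simp
qed

lemma tr11: "((P::complex^'m^1) ** (Q::complex^1^'m)) $ 1 $ 1 = trace (Q ** P)"
  by (simp add: trace_def matrix_matrix_mult_def mult.commute)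

lemma trace_uminus: "trace (- (A::complex^'n^'n)) = - trace A"
  by (simp add: trace_def sum_negf)

theorem mainTheorem6:
  fixes S K :: "complex^'m^'m"
    and U :: "complex^'m^1"
    and V :: "complex^1^'m"
    and p0 :: complex
    and Xi :: "real \<Rightarrow> real \<Rightarrow> complex^'m^'m"
    and q p D :: "real \<Rightarrow> real \<Rightarrow> complex"
    and x y :: real
  assumes S_inv: "invertible S"
    and K_sol: "S ** K + K ** S = V ** U"
    and Xi_def: "\<And>x y. Xi x y = mat_exp (- (x *\<^sub>R S) - y *\<^sub>R matrix_inv S)"
    and q_def: "\<And>x y. q x y =
        (U ** Xi x y ** matrix_inv (mat 1 + (K ** Xi x y) ** (K ** Xi x y)) ** V) $ 1 $ 1"
    and p_def: "\<And>x y. p x y = p0 -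
        (U ** Xi x y ** K ** Xi x y ** matrix_inv (mat 1 + (K ** Xi x y) ** (K ** Xi x y)) ** V) $ 1 $ 1"
    and D_def: "\<And>x y. D x y = det (mat 1 + (K ** Xi x y) ** (K ** Xi x y))"
    and D_nz: "D x y \<noteq> 0"
  shows "p x y = p0 + vector_derivative (\<lambda>t. D t y) (at x) / D x y
     \<and> q x y = 2 * trace (S ** K ** Xi x y ** matrix_inv (mat 1 + (K ** Xi x y) ** (K ** Xi x y)))"
proof -
  define X where "X = Xi x y"
  define A where "A = K ** X"
  define M where "M = (\<lambda>t. mat 1 + (K ** Xi t y) ** (K ** Xi t y))"
  define B where "B = matrix_inv (M x)"
  have XiF: "(\<lambda>t. Xi t y) = (\<lambda>t. mat_exp (- (t *\<^sub>R S) - y *\<^sub>R matrix_inv S))"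
    by (simp add: Xi_def)
  have XS: "X ** S = S ** X"
    unfolding X_def Xi_def by (rule Xi_props(1)[OF S_inv])
  have XD: "((\<lambda>t. Xi t y) has_vector_derivative (- S ** X)) (at x)"
    unfolding XiF X_def Xi_def by (rule Xi_props(2)[OF S_inv])
  have AD: "((\<lambda>t. K ** Xi t y) has_vector_derivative (K ** (- S ** X))) (at x)"
    by (rule bounded_linear.has_vector_derivative[OF bl_mm_left XD])
  have MD: "(M has_vector_derivative (A ** (K ** (- S ** X)) + (K ** (- S ** X)) ** A)) (at x)"
  proof -
    have "((\<lambda>t. (K ** Xi t y) ** (K ** Xi t y)) has_vector_derivative
        ((K ** Xi x y) ** (K ** (- S ** X)) + (K ** (- S ** X)) ** (K ** Xi x y))) (at x)"
      by (rule bounded_bilinear.has_vector_derivative[OF bbl_mm AD AD])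
    then show ?thesis unfolding M_def A_def X_def
      by (rule has_vector_derivative_add[OF has_vector_derivative_const, simplified])
  qed
  have Mx: "M x = mat 1 + A ** A" by (simp add: M_def A_def X_def)
  have Dx: "D x y = det (M x)" by (simp add: D_def M_def)
  have Dt: "(\<lambda>t. D t y) = (\<lambda>t. det (M t))" by (simp add: D_def M_def)
  have inv: "invertible (M x)" using D_nz Dx invertible_det_nz by auto
  note MB = matrix_inv_both[OF inv, folded B_def]
  have LAB: "Lm A * Lm B = Lm B * Lm A"
    by (rule ring_comm_inv) (use MB in \<open>simp_all add: Mx Lm_simps[symmetric]\<close>)
  have LAB': "Lm B * (Lm A * z) = Lm A * (Lm B * z)" for z
    by (simp add: mult.assoc[symmetric] LAB)
  have LXS: "Lm X * Lm S = Lm S * Lm X" by (simp add: Lm_mult[symmetric] XS)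
  have VU: "V ** U = S ** K + K ** S" using K_sol by simp
  have dv: "vector_derivative (\<lambda>t. D t y) (at x) = trace ((A ** (K ** (- S ** X)) + (K ** (- S ** X)) ** A) ** B) * D x y"
    unfolding Dt Dx B_def by (rule vector_derivative_at[OF det_vd[OF MD inv]])
  define Q1 where "Q1 = S ** A ** A ** B"
  define Q2 where "Q2 = A ** S ** A ** B"
  define Q3 where "Q3 = A ** A ** S ** B"
  have e1: "(V ** U) ** (X ** K ** X ** B) = Q1 + Q2"
    unfolding VU Q1_def Q2_def A_def
    by (rule Lm_inj) (simp add: Lm_simps ring_a[OF LXS])
  have e2: "(A ** (K ** (- S ** X)) + (K ** (- S ** X)) ** A) ** B = - Q3 - Q2"
    unfolding Q3_def Q2_def A_def
    by (rule Lm_inj) (simp only: Lm_simps ring_c[OF LXS])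
  have e3: "trace Q3 = trace Q1"
  proof -
    have "trace Q3 = trace (B ** (A ** A ** S))" unfolding Q3_def by (rule trace_mul_sym)
    also have "B ** (A ** A ** S) = (A ** A ** B) ** S"
      by (rule Lm_inj) (simp add: Lm_simps mult.assoc LAB' LAB[symmetric])
    also have "trace \<dots> = trace (S ** (A ** A ** B))" by (rule trace_mul_sym)
    finally show ?thesis unfolding Q1_def by (simp add: matrix_mul_assoc)
  qed
  have pval: "p x y = p0 + trace ((A ** (K ** (- S ** X)) + (K ** (- S ** X)) ** A) ** B)"
  proof -
    have "(U ** Xi x y ** K ** Xi x y ** matrix_inv (mat 1 + (K ** Xi x y) ** (K ** Xi x y)) ** V) $ 1 $ 1
        = (U ** (X ** K ** X ** B) ** V) $ 1 $ 1"
      by (simp add: X_def B_def M_def matrix_mul_assoc)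
    also have "\<dots> = trace (V ** (U ** (X ** K ** X ** B)))" by (rule tr11)
    also have "\<dots> = trace (Q1 + Q2)" by (subst matrix_mul_assoc) (simp only: e1)
    finally show ?thesis unfolding p_def e2
      by (simp add: trace_add trace_sub trace_uminus e3)
  qed
  have qval: "q x y = 2 * trace (S ** K ** Xi x y ** matrix_inv (mat 1 + (K ** Xi x y) ** (K ** Xi x y)))"
  proof -
    have "q x y = (U ** (X ** B) ** V) $ 1 $ 1"
      by (simp add: q_def X_def B_def M_def matrix_mul_assoc)
    also have "\<dots> = trace (V ** (U ** (X ** B)))" by (rule tr11)
    also have "\<dots> = trace ((V ** U) ** (X ** B))" by (simp add: matrix_mul_assoc)
    also have "(V ** U) ** (X ** B) = S ** A ** B + A ** S ** B"
      unfolding VU A_def by (rule Lm_inj) (simp add: Lm_simps ring_b[OF LXS])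
    also have "trace (S ** A ** B + A ** S ** B) = trace (S ** A ** B) + trace (A ** S ** B)"
      by (rule trace_add)
    also have "trace (A ** S ** B) = trace (B ** (A ** S))" by (rule trace_mul_sym)
    also have "B ** (A ** S) = (A ** B) ** S"
      by (rule Lm_inj) (simp add: Lm_simps mult.assoc LAB' LAB[symmetric])
    also have "trace ((A ** B) ** S) = trace (S ** A ** B)"
      by (simp add: trace_mul_sym[of "A ** B"] matrix_mul_assoc)
    finally show ?thesis by (simp add: A_def X_def B_def M_def matrix_mul_assoc)
  qed
  have "vector_derivative (\<lambda>t. D t y) (at x) / D x y = trace ((A ** (K ** (- S ** X)) + (K ** (- S ** X)) ** A) ** B)"
    using D_nz by (simp add: dv)
  with pval qval show ?thesis by simp
qed


end
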